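(* For all $n\ge1$, $a_{\{0102,0121\}}(n)=\frac12\left(3\cdot2^n-n^2-n-2\right)$.
   Context: An ascent in an integer sequence $s_1\cdots s_m$ is an index $j$ with $s_j<s_{j+1}$; $\mathrm{asc}$ denotes the number of ascents. An ascent sequence is a sequence $x_1\cdots x_n$ of nonnegative integers with $x_1=0$ and $x_i\le 1+\mathrm{asc}(x_1\cdots x_{i-1})$ for all $i\ge2$. The reduction $\mathrm{red}(w)$ of an integer sequence $w$ replaces the $i$-th smallest distinct letter of $w$ by $i-1$; a pattern is a reduced sequence. A sequence $x$ contains a pattern $p=p_1\cdots p_k$ if there are indices $i_1<\cdots<i_k$ with $\mathrm{red}(x_{i_1}\cdots x_{i_k})=p$; otherwise $x$ avoids $p$. For a finite set $P$ of patterns, $a_P(n)$ denotes the number of ascent sequences of length $n$ avoiding every pattern in $P$. *)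

theory Defs
  imports Complex_Main
begin

definition asc :: "nat list \<Rightarrow> nat" where
  "asc s = card {j. Suc j < length s \<and> s ! j < s ! Suc j}"

definition ascent_seq :: "nat list \<Rightarrow> bool" where
  "ascent_seq x \<longleftrightarrow> x \<noteq> [] \<and> x ! 0 = 0 \<and>
     (\<forall>i. 0 < i \<and> i < length x \<longrightarrow> x ! i \<le> 1 + asc (take i x))"

definition red :: "nat list \<Rightarrow> nat list" where
  "red w = map (\<lambda>a. card {b \<in> set w. b < a}) w"

definition contains :: "nat list \<Rightarrow> nat list \<Rightarrow> bool" where
  "contains x p \<longleftrightarrow> (\<exists>is. length is = length p \<and> sorted_wrt (<) is \<and>
      (\<forall>i\<in>set is. i < length x) \<and> red (map (\<lambda>i. x ! i) is) = p)"

definition avoids :: "nat list \<Rightarrow> nat list \<Rightarrow> bool" where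
  "avoids x p \<longleftrightarrow> \<not> contains x p"

definition a_P :: "nat list set \<Rightarrow> nat \<Rightarrow> nat" where
  "a_P P n = card {x. ascent_seq x \<and> length x = n \<and> (\<forall>p\<in>P. avoids x p)}"

end

theory Submission
  imports Defs
begin


lemma card_less_iff:
  fixes S :: "nat set"
  assumes "finite S" "y1 \<in> S" "y2 \<in> S"
  shows "card {z\<in>S. z < y1} < card {z\<in>S. z < y2} \<longleftrightarrow> y1 < y2"
proof
  assume "y1 < y2"
  then have "{z\<in>S. z < y1} \<subset> {z\<in>S. z < y2}" using assms by auto
  then show "card {z\<in>S. z < y1} < card {z\<in>S. z < y2}"
    using assms by (intro psubset_card_mono) auto
next
  assume a: "card {z\<in>S. z < y1} < card {z\<in>S. z < y2}"
  show "y1 < y2"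
  proof (rule ccontr)
    assume "\<not> y1 < y2"
    then have "{z\<in>S. z < y2} \<subseteq> {z\<in>S. z < y1}" by auto
    then have "card {z\<in>S. z < y2} \<le> card {z\<in>S. z < y1}"
      using assms by (intro card_mono) auto
    with a show False by simp
  qed
qed

lemma red_less:
  assumes "i < length w" "j < length w"
  shows "red w ! i < red w ! j \<longleftrightarrow> w ! i < w ! j"
  using assms card_less_iff[of "set w" "w!i" "w!j"] by (simp add: red_def)

lemma red_eq:
  assumes "i < length w" "j < length w"
  shows "red w ! i = red w ! j \<longleftrightarrow> w ! i = w ! j"
  using red_less[OF assms] red_less[OF assms(2,1)] by (metis less_irrefl nat_neq_iff)

lemma length_red[simp]: "length (red w) = length w" by (simp add: red_def)

lemma len4: "length is = Suc (Suc (Suc (Suc 0))) \<Longrightarrow> \<exists>a b c d. is = [a,b,c,d]"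
  by (cases "is"; simp; rename_tac xs1; case_tac xs1; simp; rename_tac xs2; case_tac xs2; simp;
      rename_tac xs3; case_tac xs3; simp)

definition VA :: "nat list \<Rightarrow> bool" where
  "VA x \<longleftrightarrow> (\<forall>i j k l. i<j \<longrightarrow> j<k \<longrightarrow> k<l \<longrightarrow> l<length x \<longrightarrow>
     \<not>(x!i < x!j \<and> x!i = x!k \<and> x!j < x!l))"

definition VB :: "nat list \<Rightarrow> bool" where
  "VB x \<longleftrightarrow> (\<forall>i j k l. i<j \<longrightarrow> j<k \<longrightarrow> k<l \<longrightarrow> l<length x \<longrightarrow>
     \<not>(x!i < x!j \<and> x!j < x!k \<and> x!j = x!l))"

lemma red_0102:
  assumes "a < b" "b < (c::nat)"
  shows "red [a,b,a,c] = [0,1,0,2]"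
proof -
  have s: "set [a,b,a,c] = {a,b,c}" by auto
  have 1: "{z\<in>{a,b,c}. z < a} = {}" using assms by auto
  have 2: "{z\<in>{a,b,c}. z < b} = {a}" using assms by auto
  have 3: "{z\<in>{a,b,c}. z < c} = {a,b}" using assms by auto
  show ?thesis unfolding red_def s using 1 2 3 assms by simp
qed

lemma red_0121:
  assumes "a < b" "b < (c::nat)"
  shows "red [a,b,c,b] = [0,1,2,1]"
proof -
  have s: "set [a,b,c,b] = {a,b,c}" by auto
  have 1: "{z\<in>{a,b,c}. z < a} = {}" using assms by auto
  have 2: "{z\<in>{a,b,c}. z < b} = {a}" using assms by auto
  have 3: "{z\<in>{a,b,c}. z < c} = {a,b}" using assms by auto
  show ?thesis unfolding red_def s using 1 2 3 assms by simp
qed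

lemma avoidsA: "avoids x [0,1,0,2] \<longleftrightarrow> VA x"
proof
  assume av: "avoids x [0,1,0,2]"
  show "VA x" unfolding VA_def
  proof (intro allI impI notI)
    fix i j k l assume h: "i<j" "j<k" "k<l" "l<length x" "x!i < x!j \<and> x!i = x!k \<and> x!j < x!l"
    have "contains x [0,1,0,2]" unfolding contains_def
      apply (rule exI[of _ "[i,j,k,l]"])
      using h red_0102[of "x!i" "x!j" "x!l"] by auto
    with av show False by (simp add: avoids_def)
  qed
next
  assume va: "VA x"
  show "avoids x [0,1,0,2]" unfolding avoids_def contains_def
  proof
    assume "\<exists>is. length is = length [0::nat, 1, 0, 2] \<and> sorted_wrt (<) is \<and>
      (\<forall>i\<in>set is. i < length x) \<and> red (map ((!) x) is) = [0, 1, 0, 2]"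
    then obtain "is" where h: "length is = length [0::nat,1,0,2]" "sorted_wrt (<) is" "\<forall>i\<in>set is. i < length x"
       "red (map ((!) x) is) = [0, 1, 0, 2]" by blast
    obtain i j k l where e: "is = [i,j,k,l]" using len4[of "is"] h(1) by auto
    let ?w = "[x!i, x!j, x!k, x!l]"
    have r: "red ?w = [0,1,0,2]" using h(4) e by simp
    have "?w!0 < ?w!1" using red_less[of 0 ?w 1] r by simp
    moreover have "?w!0 = ?w!2" using red_eq[of 0 ?w 2] r by simp
    moreover have "?w!1 < ?w!3" using red_less[of 1 ?w 3] r by simp
    ultimately show False using va h(2,3) e unfolding VA_def by auto
  qed
qed

lemma avoidsB: "avoids x [0,1,2,1] \<longleftrightarrow> VB x"
proof
  assume av: "avoids x [0,1,2,1]"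
  show "VB x" unfolding VB_def
  proof (intro allI impI notI)
    fix i j k l assume h: "i<j" "j<k" "k<l" "l<length x" "x!i < x!j \<and> x!j < x!k \<and> x!j = x!l"
    have "contains x [0,1,2,1]" unfolding contains_def
      apply (rule exI[of _ "[i,j,k,l]"])
      using h red_0121[of "x!i" "x!j" "x!k"] by auto
    with av show False by (simp add: avoids_def)
  qed
next
  assume va: "VB x"
  show "avoids x [0,1,2,1]" unfolding avoids_def contains_def
  proof
    assume "\<exists>is. length is = length [0::nat, 1, 2, 1] \<and> sorted_wrt (<) is \<and>
      (\<forall>i\<in>set is. i < length x) \<and> red (map ((!) x) is) = [0, 1, 2, 1]"
    then obtain "is" where h: "length is = length [0::nat,1,2,1]" "sorted_wrt (<) is" "\<forall>i\<in>set is. i < length x"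
       "red (map ((!) x) is) = [0, 1, 2, 1]" by blast
    obtain i j k l where e: "is = [i,j,k,l]" using len4[of "is"] h(1) by auto
    let ?w = "[x!i, x!j, x!k, x!l]"
    have r: "red ?w = [0,1,2,1]" using h(4) e by simp
    have "?w!0 < ?w!1" using red_less[of 0 ?w 1] r by simp
    moreover have "?w!1 < ?w!2" using red_less[of 1 ?w 2] r by simp
    moreover have "?w!1 = ?w!3" using red_eq[of 1 ?w 3] r by simp
    moreover have "i<j" "j<k" "k<l" "l<length x" using h(2,3) e by auto
    ultimately show False using va unfolding VB_def by (metis (no_types) nth_Cons_0 nth_Cons_Suc numeral_2_eq_2 numeral_3_eq_3 One_nat_def)
  qed
qed


definition stair :: "nat list \<Rightarrow> nat \<Rightarrow> bool" where
  "stair x L \<longleftrightarrow> (\<forall>i. Suc i < L \<longrightarrow> x!Suc i = x!i \<or> x!Suc i = Suc (x!i))"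

definition cnt :: "nat list \<Rightarrow> nat \<Rightarrow> nat" where
  "cnt x i = card {j. Suc j \<le> i \<and> x!j < x!Suc j}"

lemma cnt_Suc: "cnt x (Suc i) = cnt x i + (if x!i < x!Suc i then 1 else 0)"
proof -
  have e: "{j. Suc j \<le> Suc i \<and> x!j < x!Suc j} =
     {j. Suc j \<le> i \<and> x!j < x!Suc j} \<union> (if x!i < x!Suc i then {i} else {})"
    by (auto simp: le_Suc_eq)
  have f: "finite {j. Suc j \<le> i \<and> x!j < x!Suc j}" by (rule finite_subset[of _ "{..<i}"]) auto
  show ?thesis unfolding cnt_def e using f by auto
qed

lemma stair_cnt: "stair x L \<Longrightarrow> x!0 = 0 \<Longrightarrow> i < L \<Longrightarrow> cnt x i = x!i"
proof (induction i)
  case 0 then show ?case by (simp add: cnt_def)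
next
  case (Suc i)
  then have "x!Suc i = x!i \<or> x!Suc i = Suc (x!i)" unfolding stair_def by auto
  then show ?case using Suc cnt_Suc[of x i] by auto
qed

lemma asc_cnt: "x \<noteq> [] \<Longrightarrow> asc x = cnt x (length x - 1)"
  unfolding asc_def cnt_def by (rule arg_cong[where f=card]) auto

lemma stair_mono: "stair x L \<Longrightarrow> i \<le> j \<Longrightarrow> j < L \<Longrightarrow> x!i \<le> x!j"
proof (induction j)
  case 0 then show ?case by simp
next
  case (Suc j)
  show ?case
  proof (cases "i = Suc j")
    case False
    then have "x!i \<le> x!j" using Suc by auto
    moreover have "x!Suc j = x!j \<or> x!Suc j = Suc (x!j)" using Suc unfolding stair_def by auto
    ultimately show ?thesis by auto
  qed simp
qed

lemma stair_ivt: "stair x L \<Longrightarrow> x!0 = 0 \<Longrightarrow> 0 < L \<Longrightarrow> v \<le> x!(L-1) \<Longrightarrow> \<exists>j<L. x!j = v"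
proof (induction L)
  case 0 then show ?case by simp
next
  case (Suc L)
  show ?case
  proof (cases L)
    case 0 then show ?thesis using Suc by auto
  next
    case (Suc L')
    have st: "stair x L" using Suc.prems unfolding stair_def by auto
    have "x!L = x!L' \<or> x!L = Suc (x!L')" using Suc.prems Suc unfolding stair_def by auto
    then show ?thesis
    proof
      assume "x!L = x!L'"
      then obtain j where "j<L" "x!j = v" using Suc.IH[OF st] Suc Suc.prems by auto
      then show ?thesis by (intro exI[of _ j]) auto
    next
      assume h: "x!L = Suc (x!L')"
      show ?thesis
      proof (cases "v = x!L")
        case True then show ?thesis by auto
      next
        case False
        then have "v \<le> x!(L-1)" using Suc Suc.prems h by auto
        then obtain j where "j<L" "x!j = v" using Suc.IH[OF st] Suc Suc.prems by auto
        then show ?thesis by (intro exI[of _ j]) auto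
      qed
    qed
  qed
qed

definition inA :: "nat \<Rightarrow> nat list \<Rightarrow> bool" where
  "inA n x \<longleftrightarrow> length x = n \<and> x!0 = 0 \<and> (\<forall>i<n. x!i \<le> 1)"

definition inB :: "nat \<Rightarrow> nat list \<Rightarrow> bool" where
  "inB n x \<longleftrightarrow> length x = n \<and> x!0 = 0 \<and> (\<exists>L. 1 \<le> L \<and> L \<le> n \<and> stair x L \<and> 2 \<le> x!(L-1)
      \<and> (\<forall>i. L \<le> i \<and> i < n \<longrightarrow> x!i = 0))"

definition valid :: "nat list \<Rightarrow> bool" where
  "valid x \<longleftrightarrow> ascent_seq x \<and> VA x \<and> VB x"

lemma take_cnt: "i \<le> length x \<Longrightarrow> cnt (take i x) k = cnt x k" if "k < i" for k
  unfolding cnt_def using that by (intro arg_cong[where f=card]) auto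

lemma inA_valid: "n \<ge> 1 \<Longrightarrow> inA n x \<Longrightarrow> valid x"
  unfolding valid_def
proof (intro conjI)
  assume n: "n \<ge> 1" and a: "inA n x"
  then have b: "\<And>i. i < length x \<Longrightarrow> x!i \<le> 1" and l: "length x = n" and z: "x!0 = 0"
    unfolding inA_def by auto
  show "ascent_seq x" unfolding ascent_seq_def using n l z b by fastforce
  show "VA x" unfolding VA_def
  proof (intro allI impI notI)
    fix i j k l' assume h: "i<j" "j<k" "k<l'" "l'<length x" "x!i < x!j \<and> x!i = x!k \<and> x!j < x!l'"
    then show False using b[of l'] by auto
  qed
  show "VB x" unfolding VB_def
  proof (intro allI impI notI)
    fix i j k l' assume h: "i<j" "j<k" "k<l'" "l'<length x" "x!i < x!j \<and> x!j < x!k \<and> x!j = x!l'"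
    then show False using b[of k] by auto
  qed
qed


lemma inB_valid: "inB n x \<Longrightarrow> valid x"
  unfolding valid_def
proof (intro conjI)
  assume b: "inB n x"
  then obtain L where l: "length x = n" and z: "x!0 = 0" and L: "1 \<le> L" "L \<le> n" and st: "stair x L"
    and m: "2 \<le> x!(L-1)" and t: "\<And>i. L \<le> i \<Longrightarrow> i < n \<Longrightarrow> x!i = 0"
    unfolding inB_def by blast
  show "ascent_seq x" unfolding ascent_seq_def
  proof (intro conjI allI impI)
    show "x \<noteq> []" using l L by auto
    show "x!0 = 0" by (rule z)
    fix i assume i: "0 < i \<and> i < length x"
    show "x ! i \<le> 1 + asc (take i x)"
    proof (cases "i < L")
      case False then show ?thesis using t i l by simp
    next
      case True
      have "asc (take i x) = cnt (take i x) (i - 1)" using i asc_cnt[of "take i x"] by (cases x) auto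
      also have "\<dots> = cnt x (i - 1)" using i by (intro take_cnt) auto
      also have "\<dots> = x!(i-1)" using stair_cnt[OF st z] True by simp
      finally have e: "asc (take i x) = x!(i-1)" .
      obtain i' where ii: "i = Suc i'" using i by (cases i) auto
      have "x!Suc i' = x!i' \<or> x!Suc i' = Suc (x!i')"
        using st True ii unfolding stair_def by auto
      then show ?thesis using e ii by auto
    qed
  qed
  show "VA x" unfolding VA_def
  proof (intro allI impI notI)
    fix i j k l' assume h: "i<j" "j<k" "k<l'" "l'<length x" "x!i < x!j \<and> x!i = x!k \<and> x!j < x!l'"
    show False
    proof (cases "l' < L")
      case True
      then have "x!j \<le> x!k" using stair_mono[OF st, of j k] h by auto
      then show False using h by auto
    next
      case False then show False using t[of l'] h l by auto
    qed
  qed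
  show "VB x" unfolding VB_def
  proof (intro allI impI notI)
    fix i j k l' assume h: "i<j" "j<k" "k<l'" "l'<length x" "x!i < x!j \<and> x!j < x!k \<and> x!j = x!l'"
    show False
    proof (cases "l' < L")
      case True
      then have "x!k \<le> x!l'" using stair_mono[OF st, of k l'] h by auto
      then show False using h by auto
    next
      case False then show False using t[of l'] h l by auto
    qed
  qed
qed

lemma valid_prefix:
  assumes v: "valid (x@[v])" and ne: "x \<noteq> []"
  shows "valid x" "v \<le> 1 + asc x"
proof -
  have as: "ascent_seq (x@[v])" and va: "VA (x@[v])" and vb: "VB (x@[v])" using v valid_def by auto
  have "ascent_seq x" unfolding ascent_seq_def
  proof (intro conjI allI impI)
    show "x \<noteq> []" by (rule ne)
    show "x!0 = 0" using as ne unfolding ascent_seq_def by (simp add: nth_append)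
    fix i assume i: "0 < i \<and> i < length x"
    have "(x@[v]) ! i \<le> 1 + asc (take i (x@[v]))"
      using as i unfolding ascent_seq_def by auto
    then show "x ! i \<le> 1 + asc (take i x)" using i by (simp add: nth_append)
  qed
  moreover have "VA x" unfolding VA_def
  proof (intro allI impI)
    fix i j k l assume h: "i<j" "j<k" "k<l" "l<length x"
    have "\<not> ((x@[v])!i < (x@[v])!j \<and> (x@[v])!i = (x@[v])!k \<and> (x@[v])!j < (x@[v])!l)"
      using va[unfolded VA_def, rule_format, of i j k l] h by simp
    then show "\<not> (x!i < x!j \<and> x!i = x!k \<and> x!j < x!l)" using h by (simp add: nth_append)
  qed
  moreover have "VB x" unfolding VB_def
  proof (intro allI impI)
    fix i j k l assume h: "i<j" "j<k" "k<l" "l<length x"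
    have "\<not> ((x@[v])!i < (x@[v])!j \<and> (x@[v])!j < (x@[v])!k \<and> (x@[v])!j = (x@[v])!l)"
      using vb[unfolded VB_def, rule_format, of i j k l] h by simp
    then show "\<not> (x!i < x!j \<and> x!j < x!k \<and> x!j = x!l)" using h by (simp add: nth_append)
  qed
  ultimately show "valid x" unfolding valid_def by auto
  have "(x@[v]) ! length x \<le> 1 + asc (take (length x) (x@[v]))"
    using as ne unfolding ascent_seq_def by auto
  then show "v \<le> 1 + asc x" by simp
qed


lemma VA_E: "VA y \<Longrightarrow> i<j \<Longrightarrow> j<k \<Longrightarrow> k<l \<Longrightarrow> l<length y \<Longrightarrow> y!i<y!j \<Longrightarrow> y!i = y!k \<Longrightarrow> y!j<y!l \<Longrightarrow> False"
  unfolding VA_def by blast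

lemma VB_E: "VB y \<Longrightarrow> i<j \<Longrightarrow> j<k \<Longrightarrow> k<l \<Longrightarrow> l<length y \<Longrightarrow> y!i<y!j \<Longrightarrow> y!j<y!k \<Longrightarrow> y!j = y!l \<Longrightarrow> False"
  unfolding VB_def by blast

lemma bin01: "(a::nat) \<le> 1 \<Longrightarrow> b \<le> 1 \<Longrightarrow> a < b \<Longrightarrow> a = 0 \<and> b = 1" by auto

lemma step:
  assumes v: "valid (x@[v])" and ne: "x \<noteq> []"
    and ih: "inA (length x) x \<or> inB (length x) x"
  shows "inA (Suc (length x)) (x@[v]) \<or> inB (Suc (length x)) (x@[v])"
proof -
  define n where "n = length x"
  have n0: "0 < n" using ne n_def by auto
  have va: "VA (x@[v])" and vb: "VB (x@[v])" using v valid_def by auto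
  have vle: "v \<le> 1 + asc x" using valid_prefix[OF v ne] by simp
  have nth1: "\<And>i. i < n \<Longrightarrow> (x@[v])!i = x!i" by (simp add: nth_append n_def)
  have nth2: "(x@[v])!n = v" by (simp add: n_def)
  have len: "length (x@[v]) = Suc n" by (simp add: n_def)
  have asc_e: "asc x = cnt x (n-1)" using asc_cnt[OF ne] n_def by simp
  from ih show ?thesis
  proof
    assume a: "inA (length x) x"
    then have z: "x!0 = 0" and b: "\<And>i. i < n \<Longrightarrow> x!i \<le> 1" unfolding inA_def n_def by auto
    show ?thesis
    proof (cases "v \<le> 1")
      case True
      then have "inA (Suc n) (x@[v])" unfolding inA_def using b z n0 nth1 nth2 len
        by (auto simp: less_Suc_eq nth_append n_def)
      then show ?thesis by (simp add: n_def)
    next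
      case False
      have no10: "\<not> (i < j \<and> j < n \<and> x!i = 1 \<and> x!j = 0)" for i j
      proof
        assume h: "i < j \<and> j < n \<and> x!i = 1 \<and> x!j = 0"
        then have "0 < i" using z by (cases i) auto
        then show False using VA_E[OF va, of 0 i j n] h False nth1 nth2 len z by auto
      qed
      show ?thesis
      proof (cases "x!(n-1) = 0")
        case True
        have "x!i = 0" if "i < n" for i
        proof (cases "i = n - 1")
          case False then show ?thesis using no10[of i "n-1"] that True b[of i] n0 by auto
        qed (use True in auto)
        then have e: "{j. Suc j \<le> n-1 \<and> x!j < x!Suc j} = {}" by auto
        have "asc x = 0" unfolding asc_e cnt_def e by simp
        then show ?thesis using vle False by simp
      next
        case last1: False
        then have last1: "x!(n-1) = 1" using b[of "n-1"] n0 by auto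
        let ?S = "{j. Suc j \<le> n-1 \<and> x!j < x!Suc j}"
        have fin: "finite ?S" by (rule finite_subset[of _ "{..<n}"]) auto
        have mem: "x!j = 0 \<and> x!Suc j = 1" if "j \<in> ?S" for j
        proof -
          from that have h1: "Suc j \<le> n - 1" and h2: "x!j < x!Suc j" by auto
          have h3: "Suc j < n" "j < n" using h1 n0 by linarith+
          have "x!j \<le> 1" "x!Suc j \<le> 1" using b[OF h3(2)] b[OF h3(1)] by auto
          then show ?thesis using bin01 h2 by presburger
        qed
        have "\<forall>a1\<in>?S. \<forall>a2\<in>?S. a1 = a2"
        proof (intro ballI, rule ccontr)
          fix a1 a2 assume h: "a1 \<in> ?S" "a2 \<in> ?S" "a1 \<noteq> a2"
          have gen: "False" if "p \<in> ?S" "q \<in> ?S" "p < q" for p q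
          proof (cases "Suc p = q")
            case True then show False using mem[OF that(1)] mem[OF that(2)] by auto
          next
            case False
            then show False using no10[of "Suc p" q] mem[OF that(1)] mem[OF that(2)] that by auto
          qed
          show False
          proof (cases "a1 < a2")
            case True then show False using gen h by blast
          next
            case False then have "a2 < a1" using h(3) by simp
            then show False using gen h by blast
          qed
        qed
        then have "card ?S \<le> 1" using card_le_Suc0_iff_eq[OF fin] by simp
        then have "asc x \<le> 1" unfolding asc_e cnt_def by simp
        then have v2: "v = 2" using vle False by simp
        have st: "stair (x@[v]) (Suc n)" unfolding stair_def
        proof (intro allI impI)
          fix i assume i: "Suc i < Suc n"
          show "(x@[v])!Suc i = (x@[v])!i \<or> (x@[v])!Suc i = Suc ((x@[v])!i)"
          proof (cases "Suc i < n")
            case True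
            then have "x!Suc i = x!i \<or> x!Suc i = Suc (x!i)"
              using b[of i] b[of "Suc i"] no10[of i "Suc i"] by (cases "x!i"; cases "x!Suc i") auto
            then show ?thesis using nth1 True by auto
          next
            case False
            then have "i = n - 1" "Suc i = n" using i by auto
            then show ?thesis using nth1 nth2 v2 last1 by auto
          qed
        qed
        have "inB (Suc n) (x@[v])" unfolding inB_def
          using st len z nth1[of 0] n0 nth2 v2 by (intro conjI exI[of _ "Suc n"]) auto
        then show ?thesis by (simp add: n_def)
      qed
    qed
  next
    assume bb: "inB (length x) x"
    then obtain L where z: "x!0 = 0" and L: "1 \<le> L" "L \<le> n" and st: "stair x L"
      and m: "2 \<le> x!(L-1)" and t: "\<And>i. L \<le> i \<Longrightarrow> i < n \<Longrightarrow> x!i = 0"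
      unfolding inB_def n_def by blast
    define m where "m = x!(L-1)"
    have st': "stair (x@[v]) L" using st L nth1 unfolding stair_def by auto
    have keepL: "inB (Suc n) (x@[v])" if "v = 0"
      unfolding inB_def using that st' L len z nth1[of 0] n0 nth1[of "L-1"] nth2 m t nth1
      by (intro conjI exI[of _ L]) (auto simp: less_Suc_eq)
    obtain j1 where j1: "j1 < L" "x!j1 = 1" using stair_ivt[OF st z, of 1] L m by auto
    have j10: "0 < j1" using j1 z by (cases j1) auto
    show ?thesis
    proof (cases "L = n")
      case True
      have "asc x = m" using asc_e stair_cnt[OF st z, of "n-1"] True m_def n0 by simp
      then have vm: "v \<le> Suc m" using vle by simp
      show ?thesis
      proof (cases "v = 0")
        case True then show ?thesis using keepL by (simp add: n_def)
      next
        case v0: False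
        show ?thesis
        proof (cases "v < m")
          case True
          obtain j where j: "j < L" "x!j = v" using stair_ivt[OF st z, of v] L True m_def by auto
          have "0 < j" using j z v0 by (cases j) auto
          moreover have "j < L - 1" using j True m_def by (cases "j = L - 1") auto
          ultimately show ?thesis
            using VB_E[OF vb, of 0 j "L-1" n] j z v0 True m_def nth1 nth2 len L \<open>L = n\<close> by auto
        next
          case False
          then have vv: "v = m \<or> v = Suc m" using vm by auto
          have st2: "stair (x@[v]) (Suc n)" unfolding stair_def
          proof (intro allI impI)
            fix i assume i: "Suc i < Suc n"
            show "(x@[v])!Suc i = (x@[v])!i \<or> (x@[v])!Suc i = Suc ((x@[v])!i)"
            proof (cases "Suc i < n")
              case True
              then show ?thesis using st \<open>L = n\<close> nth1 unfolding stair_def by auto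
            next
              case False
              then have "i = n - 1" "Suc i = n" using i by auto
              then show ?thesis using nth1 nth2 vv m_def \<open>L = n\<close> by auto
            qed
          qed
          have "inB (Suc n) (x@[v])" unfolding inB_def
            using st2 len z nth1[of 0] n0 nth2 vv m m_def by (intro conjI exI[of _ "Suc n"]) auto
          then show ?thesis by (simp add: n_def)
        qed
      qed
    next
      case False
      then have Ln: "L < n" using L by auto
      have xl: "x!(n-1) = 0" using t[of "n-1"] Ln by auto
      show ?thesis
      proof (cases "v = 0")
        case True then show ?thesis using keepL by (simp add: n_def)
      next
        case v0: False
        show ?thesis
        proof (cases "v = 1")
          case v1: False
          have "j1 < n - 1" using j1 Ln by auto
          moreover have "(x@[v])!0 < (x@[v])!j1" using nth1 j1 z n0 Ln by auto
          moreover have "(x@[v])!0 = (x@[v])!(n-1)" using nth1 xl z n0 by auto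
          moreover have "(x@[v])!j1 < (x@[v])!n" using nth1 nth2 j1 Ln v1 v0 by auto
          ultimately have False using VA_E[OF va, of 0 j1 "n-1" n] j10 len n0 by auto
          then show ?thesis ..
        next
          case True
          obtain j2 where j2: "j2 < L" "x!j2 = 2" using stair_ivt[OF st z, of 2] L m by auto
          have "j1 < j2"
          proof (rule ccontr)
            assume "\<not> j1 < j2"
            then have "x!j2 \<le> x!j1" using stair_mono[OF st, of j2 j1] j1 by auto
            then show False using j1 j2 by simp
          qed
          then show ?thesis
            using VB_E[OF vb, of 0 j1 j2 n] j1 j2 j10 z True nth1 nth2 len Ln by auto
        qed
      qed
    qed
  qed
qed

lemma valid_char: "valid x \<Longrightarrow> x \<noteq> [] \<Longrightarrow> inA (length x) x \<or> inB (length x) x"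
proof (induction x rule: rev_induct)
  case Nil then show ?case by simp
next
  case (snoc v x)
  show ?case
  proof (cases "x = []")
    case True
    then have "v = 0" using snoc.prems unfolding valid_def ascent_seq_def by simp
    then show ?thesis using True unfolding inA_def by simp
  next
    case False
    then show ?thesis using step[OF snoc.prems(1) False] snoc.IH valid_prefix[OF snoc.prems(1) False]
      by simp
  qed
qed


definition Q :: "nat \<Rightarrow> (nat \<times> nat set) set" where
  "Q n = (SIGMA L:{1..n}. {D. D \<subseteq> {1..<L} \<and> 2 \<le> card D})"

definition psi :: "nat \<Rightarrow> nat \<times> nat set \<Rightarrow> nat list" where
  "psi n p = map (\<lambda>i. if i < fst p then card {d\<in>snd p. d \<le> i} else 0) [0..<n]"

lemma cardD_Suc: "finite D \<Longrightarrow> card {d\<in>D. d \<le> Suc i} = card {d\<in>D. d \<le> i} + (if Suc i \<in> D then 1 else 0)"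
proof -
  assume f: "finite D"
  have e: "{d\<in>D. d \<le> Suc i} = {d\<in>D. d \<le> i} \<union> (if Suc i \<in> D then {Suc i} else {})"
    by (auto simp: le_Suc_eq)
  show ?thesis unfolding e using f by auto
qed

lemma psi_nth: "i < n \<Longrightarrow> psi n (L,D) ! i = (if i < L then card {d\<in>D. d \<le> i} else 0)"
  by (simp add: psi_def)

lemma psi_inB:
  assumes q: "(L,D) \<in> Q n"
  shows "inB n (psi n (L,D))"
proof -
  have L: "1 \<le> L" "L \<le> n" and D: "D \<subseteq> {1..<L}" and c: "2 \<le> card D" using q by (auto simp: Q_def)
  have fD: "finite D" using D finite_subset by blast
  let ?x = "psi n (L,D)"
  have z: "?x!0 = 0"
  proof -
    have "{d\<in>D. d \<le> 0} = {}" using D by auto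
    then show ?thesis using L psi_nth[of 0 n L D] by simp
  qed
  have st: "stair ?x L" unfolding stair_def
  proof (intro allI impI)
    fix i assume i: "Suc i < L"
    show "?x!Suc i = ?x!i \<or> ?x!Suc i = Suc (?x!i)"
      using psi_nth[of i n L D] psi_nth[of "Suc i" n L D] i L cardD_Suc[OF fD, of i] by auto
  qed
  have top: "?x!(L-1) = card D"
  proof -
    have "{d\<in>D. d \<le> L - 1} = D" using D by (auto simp: subset_iff)
    then show ?thesis using psi_nth[of "L-1" n L D] L by simp
  qed
  show ?thesis unfolding inB_def
    using L z st top c psi_nth[of _ n L D]
    by (intro conjI exI[of _ L]) (auto simp: psi_def)
qed

lemma inB_psi:
  assumes b: "inB n x"
  shows "x \<in> psi n ` Q n"
proof -
  obtain L where l: "length x = n" and z: "x!0 = 0" and L: "1 \<le> L" "L \<le> n" and st: "stair x L"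
    and m: "2 \<le> x!(L-1)" and t: "\<And>i. L \<le> i \<Longrightarrow> i < n \<Longrightarrow> x!i = 0"
    using b unfolding inB_def by blast
  define D where "D = Suc ` {j. Suc j < L \<and> x!j < x!Suc j}"
  have cD: "card {d\<in>D. d \<le> i} = x!i" if i: "i < L" for i
  proof -
    have "{d\<in>D. d \<le> i} = Suc ` {j. Suc j \<le> i \<and> x!j < x!Suc j}" unfolding D_def using i by auto
    then have "card {d\<in>D. d \<le> i} = card {j. Suc j \<le> i \<and> x!j < x!Suc j}"
      by (simp add: card_image)
    also have "\<dots> = x!i" using stair_cnt[OF st z i] unfolding cnt_def .
    finally show ?thesis .
  qed
  have Dsub: "D \<subseteq> {1..<L}" unfolding D_def by auto
  have "D = {d\<in>D. d \<le> L - 1}" using Dsub by (auto simp: subset_iff)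
  then have "card D = x!(L-1)" using cD[of "L-1"] L by simp
  then have q: "(L,D) \<in> Q n" using Dsub L m unfolding Q_def by auto
  have "x = psi n (L,D)"
  proof (rule nth_equalityI)
    show "length x = length (psi n (L,D))" using l by (simp add: psi_def)
    fix i assume "i < length x"
    then show "x!i = psi n (L,D) ! i" using psi_nth[of i n L D] cD[of i] t[of i] l by auto
  qed
  then show ?thesis using q by blast
qed

lemma psi_inj: "inj_on (psi n) (Q n)"
proof (rule inj_onI)
  fix p p' assume p: "p \<in> Q n" and p': "p' \<in> Q n" and e: "psi n p = psi n p'"
  obtain L D where pd: "p = (L,D)" by (cases p)
  obtain L' D' where pd': "p' = (L',D')" by (cases p')
  have L: "1 \<le> L" "L \<le> n" and D: "D \<subseteq> {1..<L}" and c: "2 \<le> card D" using p pd by (auto simp: Q_def)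
  have L': "1 \<le> L'" "L' \<le> n" and D': "D' \<subseteq> {1..<L'}" and c': "2 \<le> card D'" using p' pd' by (auto simp: Q_def)
  have top: "psi n (L,D) ! (L-1) = card D" if "1 \<le> L" "L \<le> n" "D \<subseteq> {1..<L}" for L D
  proof -
    have "{d\<in>D. d \<le> L - 1} = D" using that by (auto simp: subset_iff)
    then show ?thesis using psi_nth[of "L-1" n L D] that by simp
  qed
  have LL: "L = L'"
  proof (rule ccontr)
    assume "L \<noteq> L'"
    then consider "L < L'" | "L' < L" by linarith
    then show False
    proof cases
      case 1
      have "psi n (L,D) ! (L'-1) = 0" using psi_nth[of "L'-1" n L D] 1 L' by simp
      moreover have "psi n (L',D') ! (L'-1) = card D'" using top[OF L' D'] .
      ultimately show False using e pd pd' c' by simp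
    next
      case 2
      have "psi n (L',D') ! (L-1) = 0" using psi_nth[of "L-1" n L' D'] 2 L by simp
      moreover have "psi n (L,D) ! (L-1) = card D" using top[OF L D] .
      ultimately show False using e pd pd' c by simp
    qed
  qed
  have memD: "d \<in> D \<longleftrightarrow> psi n (L,D) ! (d-1) < psi n (L,D) ! d"
    if h: "1 \<le> d" "d < L" "L \<le> n" "D \<subseteq> {1..<L}" for d L D
  proof -
    have fD: "finite D" using h(4) finite_subset by blast
    obtain i where i: "d = Suc i" using h(1) by (cases d) auto
    show ?thesis using psi_nth[of i n L D] psi_nth[of d n L D] h i cardD_Suc[OF fD, of i] by auto
  qed
  have "D = D'"
  proof (rule set_eqI)
    fix d
    show "d \<in> D \<longleftrightarrow> d \<in> D'"
    proof (cases "1 \<le> d \<and> d < L")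
      case True
      then show ?thesis using memD[of d L D] memD[of d L D'] L D D' LL e pd pd' by auto
    next
      case False
      then show ?thesis using D D' LL by auto
    qed
  qed
  then show "p = p'" using pd pd' LL by simp
qed

lemma card_big: "card {D. D \<subseteq> {1..<L} \<and> 2 \<le> card D} = 2^(L-1) - L" if "1 \<le> L" for L :: nat
proof -
  let ?S = "{1..<L}"
  have cs: "card ?S = L - 1" by simp
  have "Pow ?S = ({D. D \<subseteq> ?S \<and> card D = 0} \<union> {D. D \<subseteq> ?S \<and> card D = 1}) \<union> {D. D \<subseteq> ?S \<and> 2 \<le> card D}"
    by auto
  moreover have "card (Pow ?S) = 2^(L-1)" using card_Pow[of ?S] cs by simp
  moreover have "card {D. D \<subseteq> ?S \<and> card D = 0} = 1" using n_subsets[of ?S 0] by simp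
  moreover have "card {D. D \<subseteq> ?S \<and> card D = 1} = L - 1" using n_subsets[of ?S 1] cs by simp
  moreover have "finite {D. D \<subseteq> ?S \<and> card D = 0}" "finite {D. D \<subseteq> ?S \<and> card D = 1}"
     "finite {D. D \<subseteq> ?S \<and> 2 \<le> card D}" by auto
  ultimately have "2^(L-1) = 1 + (L - 1) + card {D. D \<subseteq> ?S \<and> 2 \<le> card D}"
    by (simp add: card_Un_disjoint disjoint_iff)
  then show ?thesis using that by simp
qed

lemma card_Q: "card (Q n) = (\<Sum>L=1..n. 2^(L-1) - L)"
proof -
  have "card (Q n) = (\<Sum>L\<in>{1..n}. card {D. D \<subseteq> {1..<L} \<and> 2 \<le> card D})"
    unfolding Q_def by (subst card_SigmaI) auto
  also have "\<dots> = (\<Sum>L=1..n. 2^(L-1) - L)"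
  proof (rule sum.cong[OF refl])
    fix L assume "L \<in> {1..n}"
    then show "card {D. D \<subseteq> {1..<L} \<and> 2 \<le> card D} = 2^(L-1) - L" by (intro card_big) auto
  qed
  finally show ?thesis .
qed

lemma card_inA: "1 \<le> n \<Longrightarrow> card {x. inA n x} = 2^(n-1)"
proof -
  assume n: "1 \<le> n"
  have "{x. inA n x} = (\<lambda>ys. 0#ys) ` {ys. set ys \<subseteq> {0,1} \<and> length ys = n-1}"
  proof (rule set_eqI, rule iffI)
    fix x :: "nat list" assume "x \<in> {x. inA n x}"
    then have a: "length x = n" "x!0 = 0" "\<And>i. i<n \<Longrightarrow> x!i \<le> 1" unfolding inA_def by auto
    obtain y ys where x: "x = y # ys" using a(1) n by (cases x) auto
    have "set ys \<subseteq> {0,1}"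
    proof
      fix u assume "u \<in> set ys"
      then obtain i where "i < length ys" "ys!i = u" by (auto simp: in_set_conv_nth)
      then show "u \<in> {0,1}" using a(3)[of "Suc i"] a(1) x by auto
    qed
    then show "x \<in> (\<lambda>ys. 0#ys) ` {ys. set ys \<subseteq> {0,1} \<and> length ys = n-1}" using x a by auto
  next
    fix x :: "nat list" assume "x \<in> (\<lambda>ys. 0#ys) ` {ys. set ys \<subseteq> {0,1} \<and> length ys = n-1}"
    then obtain ys where x: "x = 0#ys" "set ys \<subseteq> {0,1}" "length ys = n-1" by auto
    have "x!i \<le> 1" if "i < n" for i
    proof (cases i)
      case (Suc j) then have "ys!j \<in> set ys" using that x by auto
      then show ?thesis using x Suc by auto
    qed (use x in auto)
    then show "x \<in> {x. inA n x}" unfolding inA_def using x n by auto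
  qed
  moreover have "card ((\<lambda>ys. 0#ys) ` {ys. set ys \<subseteq> {0,1::nat} \<and> length ys = n-1}) = 2^(n-1)"
    by (subst card_image) (auto simp: card_lists_length_eq numeral_2_eq_2)
  ultimately show ?thesis by simp
qed

lemma sum_formula: "real (\<Sum>L=1..n. 2^(L-1) - L) = 2^n - 1 - real n * (real n + 1) / 2"
proof (induction n)
  case 0 then show ?case by simp
next
  case (Suc n)
  have le: "Suc n \<le> 2^n" by (rule Suc_leI, rule less_exp)
  have "real (\<Sum>L=1..Suc n. 2^(L-1) - L) = real (\<Sum>L=1..n. 2^(L-1) - L) + real (2^n - Suc n)"
    by simp
  also have "\<dots> = 2^n - 1 - real n * (real n + 1) / 2 + (2^n - real (Suc n))"
    using Suc le by (simp add: of_nat_diff)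
  also have "\<dots> = 2^Suc n - 1 - real (Suc n) * (real (Suc n) + 1) / 2"
    by (simp add: field_simps)
  finally show ?case .
qed


theorem theorem3p5:
  fixes n :: nat
  assumes "n \<ge> 1"
  shows "real (a_P {[0,1,0,2], [0,1,2,1]} n) = (3 * 2 ^ n - real n ^ 2 - real n - 2) / 2"
proof -
  let ?V = "{x. ascent_seq x \<and> length x = n \<and> (\<forall>p\<in>{[0,1,0,2], [0,1,2,1]}. avoids x p)}"
  have eqV: "?V = {x. inA n x} \<union> {x. inB n x}"
  proof (rule set_eqI, rule iffI)
    fix x assume "x \<in> ?V"
    then have v: "valid x" and l: "length x = n" and ne: "x \<noteq> []"
      unfolding valid_def using avoidsA avoidsB by (auto simp: ascent_seq_def)
    show "x \<in> {x. inA n x} \<union> {x. inB n x}" using valid_char[OF v ne] l by auto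
  next
    fix x assume "x \<in> {x. inA n x} \<union> {x. inB n x}"
    then have "valid x \<and> length x = n" using inA_valid[OF assms] inB_valid
      unfolding inA_def inB_def by blast
    then show "x \<in> ?V" unfolding valid_def using avoidsA avoidsB by auto
  qed
  have disj: "{x. inA n x} \<inter> {x. inB n x} = {}"
  proof (rule ccontr)
    assume "{x. inA n x} \<inter> {x. inB n x} \<noteq> {}"
    then obtain x where a: "inA n x" and b: "inB n x" by auto
    from b obtain L where "1 \<le> L" "L \<le> n" "2 \<le> x!(L-1)" unfolding inB_def by blast
    moreover have "x!(L-1) \<le> 1" using a calculation unfolding inA_def by auto
    ultimately show False by simp
  qed
  have finQ: "finite (Q n)" unfolding Q_def by (intro finite_SigmaI) auto
  have imB: "{x. inB n x} = psi n ` Q n"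
    using inB_psi psi_inB by fastforce
  have cB: "card {x. inB n x} = (\<Sum>L=1..n. 2^(L-1) - L)"
    unfolding imB using card_image[OF psi_inj] card_Q by simp
  have finB: "finite {x. inB n x}" unfolding imB using finQ by simp
  have cA: "card {x. inA n x} = 2^(n-1)" using card_inA[OF assms] .
  have finA: "finite {x. inA n x}" using cA by (intro card_ge_0_finite) simp
  have "a_P {[0,1,0,2], [0,1,2,1]} n = 2^(n-1) + (\<Sum>L=1..n. 2^(L-1) - L)"
    unfolding a_P_def eqV using card_Un_disjoint[OF finA finB disj] cA cB by simp
  then have "real (a_P {[0,1,0,2], [0,1,2,1]} n) = 2^(n-1) + (2^n - 1 - real n * (real n + 1) / 2)"
    using sum_formula[of n] by simp
  moreover obtain m where m: "n = Suc m" using assms by (cases n) auto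
  ultimately show ?thesis by (simp add: field_simps power2_eq_square)
qed


end
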